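(* Let $\alpha>\beta\geq 1$ be two real numbers such that $\alpha/\beta\notin\mathbb{N}$ and $[\alpha,\beta]\le 1$. Then $\mathcal{N}_\alpha\cap\mathcal{N}_\beta= \emptyset$.
   Context: Height: for irrational $\rho>0$, $H(\rho)=\infty$; for $\rho=a/q$ with $a,q\in\mathbb{N}$, $\gcd(a,q)=1$, $H(\rho)=\max\{a,q\}$. Bracket: $[\alpha,\beta]=H(\alpha/\beta)/\max\{\alpha,\beta\}$. $P^-(n)$ denotes the smallest prime factor of $n\in\mathbb{N}$, with $P^-(1)=\infty$. For $\alpha\ge1$, $\mathcal{N}_\alpha=\bigcup_{n\in\mathbb{N},\ P^-(n)>\alpha}(n\alpha-\tfrac12,n\alpha+\tfrac12)$. *)

theory Defs
  imports "HOL-Analysis.Analysis" "HOL-Computational_Algebra.Primes"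
begin

definition height :: "real \<Rightarrow> ereal" where
  "height \<rho> =
     (if \<exists>a q::nat. a > 0 \<and> q > 0 \<and> coprime a q \<and> \<rho> = real a / real q
      then ereal (real (THE m. \<exists>a q::nat. a > 0 \<and> q > 0 \<and> coprime a q \<and>
                                  \<rho> = real a / real q \<and> m = max a q))
      else \<infinity>)"

definition bracket :: "real \<Rightarrow> real \<Rightarrow> ereal" where
  "bracket \<alpha> \<beta> = height (\<alpha> / \<beta>) / ereal (max \<alpha> \<beta>)"

definition min_prime_factor :: "nat \<Rightarrow> ereal" where
  "min_prime_factor n = (if n = 1 then \<infinity> else ereal (real (Min (prime_factors n))))"

definition NN :: "real \<Rightarrow> real set" where
  "NN \<alpha> = (\<Union>n\<in>{n::nat. n \<ge> 1 \<and> min_prime_factor n > ereal \<alpha>}.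
               {real n * \<alpha> - 1/2 <..< real n * \<alpha> + 1/2})"

end

theory Submission
  imports Defs
begin

lemma coprime_frac_unique:
  fixes a q a' q' :: nat
  assumes "q > 0" "q' > 0" "coprime a q" "coprime a' q'"
    and "real a / real q = real a' / real q'"
  shows "a = a' \<and> q = q'"
proof -
  have e: "a * q' = a' * q"
    using assms by (simp add: field_simps flip: of_nat_mult)
  have "a dvd a' * q" using e by (metis dvd_triv_left)
  hence "a dvd a'" using assms(3) by (simp add: coprime_dvd_mult_left_iff)
  moreover have "a' dvd a * q'" using e by (metis dvd_triv_left)
  hence "a' dvd a" using assms(4) by (simp add: coprime_dvd_mult_left_iff)
  ultimately have "a = a'" by (simp add: dvd_antisym)
  moreover have "q dvd q' * a" using e by (metis dvd_triv_right mult.commute)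
  hence "q dvd q'" using assms(3) by (metis coprime_commute coprime_dvd_mult_left_iff)
  moreover have "q' dvd q * a'" using e by (metis dvd_triv_right mult.commute)
  hence "q' dvd q" using assms(4) by (metis coprime_commute coprime_dvd_mult_left_iff)
  ultimately show ?thesis by (simp add: dvd_antisym)
qed

theorem lemma2p6:
  fixes \<alpha> \<beta> :: real
  assumes "\<alpha> > \<beta>" and "\<beta> \<ge> 1"
    and "\<alpha> / \<beta> \<notin> \<nat>"
    and "bracket \<alpha> \<beta> \<le> 1"
  shows "NN \<alpha> \<inter> NN \<beta> = {}"
proof -
  have apos: "\<alpha> > 0" using assms by linarith
  have ex: "\<exists>a q::nat. a > 0 \<and> q > 0 \<and> coprime a q \<and> \<alpha> / \<beta> = real a / real q"
  proof (rule ccontr)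
    assume "\<not> ?thesis"
    hence "height (\<alpha> / \<beta>) = \<infinity>" unfolding height_def by simp
    hence "bracket \<alpha> \<beta> = \<infinity>" unfolding bracket_def using assms apos by simp
    thus False using assms(4) by simp
  qed
  then obtain a q :: nat where aq: "a > 0" "q > 0" "coprime a q" "\<alpha> / \<beta> = real a / real q"
    by blast
  have "(THE m. \<exists>a' q'::nat. a' > 0 \<and> q' > 0 \<and> coprime a' q' \<and>
            \<alpha> / \<beta> = real a' / real q' \<and> m = max a' q') = max a q"
  proof (rule the_equality)
    show "\<exists>a' q'::nat. a' > 0 \<and> q' > 0 \<and> coprime a' q' \<and>
            \<alpha> / \<beta> = real a' / real q' \<and> max a q = max a' q'" using aq by blast
  next
    fix m assume "\<exists>a' q'::nat. a' > 0 \<and> q' > 0 \<and> coprime a' q' \<and>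
            \<alpha> / \<beta> = real a' / real q' \<and> m = max a' q'"
    then obtain a' q' :: nat where h: "a' > 0" "q' > 0" "coprime a' q'"
      "\<alpha> / \<beta> = real a' / real q'" "m = max a' q'" by blast
    have "a = a' \<and> q = q'" using coprime_frac_unique[of q q' a a'] aq h by simp
    thus "m = max a q" using h by simp
  qed
  hence "height (\<alpha> / \<beta>) = ereal (real (max a q))" unfolding height_def using ex by simp
  hence "bracket \<alpha> \<beta> = ereal (real (max a q) / \<alpha>)"
    unfolding bracket_def using assms by simp
  hence "real (max a q) / \<alpha> \<le> 1" using assms(4) by simp
  hence maxle: "real (max a q) \<le> \<alpha>" using apos by (simp add: divide_le_eq)
  have bpos: "\<beta> > 0" using assms by linarith
  have alpha_eq: "\<alpha> = \<beta> * real a / real q" using aq bpos by (simp add: field_simps)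
  have "q \<noteq> 1"
  proof
    assume "q = 1"
    hence "\<alpha> / \<beta> = real a" using aq by simp
    thus False using assms(3) by (metis of_nat_in_Nats)
  qed
  hence q2: "q \<ge> 2" using aq by linarith
  have ale: "real a \<le> \<alpha>" using maxle by linarith
  have qle: "real q \<le> \<alpha>" using maxle by linarith
  show ?thesis
  proof (rule ccontr)
    assume "NN \<alpha> \<inter> NN \<beta> \<noteq> {}"
    then obtain x where "x \<in> NN \<alpha>" "x \<in> NN \<beta>" by blast
    then obtain n m :: nat where n: "n \<ge> 1" "min_prime_factor n > ereal \<alpha>"
      "x > real n * \<alpha> - 1/2" "x < real n * \<alpha> + 1/2"
      and m: "m \<ge> 1" "min_prime_factor m > ereal \<beta>"
      "x > real m * \<beta> - 1/2" "x < real m * \<beta> + 1/2"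
      unfolding NN_def by auto
    have close: "\<bar>real n * \<alpha> - real m * \<beta>\<bar> < 1" using n m by linarith
    have "n * a = m * q"
    proof (rule ccontr)
      assume ne: "n * a \<noteq> m * q"
      define k where "k = int (n * a) - int (m * q)"
      have "k \<noteq> 0" using ne unfolding k_def by (metis eq_iff_diff_eq_0 of_nat_eq_iff)
      hence k1: "\<bar>real_of_int k\<bar> \<ge> 1" by linarith
      have "real n * \<alpha> - real m * \<beta> = (\<beta> / real q) * real_of_int k"
        unfolding k_def using aq alpha_eq by (simp add: field_simps)
      hence "\<bar>real n * \<alpha> - real m * \<beta>\<bar> = (\<beta> / real q) * \<bar>real_of_int k\<bar>"
        using bpos aq by (simp add: abs_mult)
      also have "\<dots> \<ge> \<beta> / real q"
      proof -
        have "\<beta> / real q > 0" using bpos aq by simp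
        thus ?thesis using k1 by (metis mult_le_cancel_left1 less_le_not_le)
      qed
      finally have "\<beta> / real q < 1" using close by linarith
      moreover have "\<beta> / real q = \<alpha> / real a" using alpha_eq aq by (simp add: field_simps)
      moreover have "\<alpha> / real a \<ge> 1" using ale aq by simp
      ultimately show False by linarith
    qed
    hence "q dvd n * a" by (metis dvd_triv_right)
    hence qn: "q dvd n" using aq(3) by (metis coprime_commute coprime_dvd_mult_left_iff)
    obtain p where p: "prime p" "p dvd q" using q2 prime_factor_nat[of q] by auto
    have "p dvd n" using p qn by (meson dvd_trans)
    have "n \<noteq> 0" using n by simp
    hence pin: "p \<in> prime_factors n" using p \<open>p dvd n\<close> by (simp add: in_prime_factors_iff)
    have "n \<noteq> 1" using qn q2 by auto
    hence "min_prime_factor n = ereal (real (Min (prime_factors n)))"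
      unfolding min_prime_factor_def by simp
    moreover have "Min (prime_factors n) \<le> p" using pin by simp
    moreover have "p \<le> q" using p aq by (simp add: dvd_imp_le)
    ultimately have "min_prime_factor n \<le> ereal \<alpha>" using qle by simp
    thus False using n(2) by simp
  qed
qed

end
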